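(* Against an oblivious adversary, it is possible to gather two robots having the same speed in the ASYNC$_{IC}$ model, i.e. with arbitrary wait times $\mathcal{W} \ge 0$ and zero computation delay $\mathcal{C}=0$: there is a randomized algorithm such that, for every choice of wait times by the adversary, the two robots gather with positive probability.
   Context: Two robots are anonymous, oblivious (no memory of past cycles), silent (no communication) points in the Euclidean plane with no common coordinate system, each having access to random bits. Each robot repeatedly executes a cycle in which it stays still for a while, then moves: the look instant (when it obtains a snapshot of the other robot's current position, which may be in motion) splits the stationary period into a wait time $\mathcal{W}$ (before the look) and a computation delay $\mathcal{C}$ (after the look, before moving). The robot then moves at its (constant) speed to a destination computed from the snapshot and its random bits, reaching it in the same cycle (rigid movement). A robot that looks and finds the other robot at its own position decides it has gathered and never moves again; gathering means both robots are at the same point. The scheduler is an adversary (asynchronous model ASYNC: robots' cycles are independent) that chooses the wait times and computation delays of every cycle of each robot. An oblivious adversary knows the algorithm but not the outcomes of the random bits, so it fixes the whole sequences of wait times and computation delays of both robots before the execution starts. ASYNC$_{IC}$ is the ASYNC model with all computation delays equal to $0$. *)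

theory Defs
  imports "HOL-Probability.Probability"
begin

text \<open>Model of two oblivious, silent, anonymous robots in the plane (identified with
  the complex numbers) under ASYNC with zero computation delay (ASYNC_IC).
  Robots are indexed by bool (True = robot 1, False = robot 2).\<close>

type_synonym bits = "nat \<Rightarrow> bool"

text \<open>An algorithm: given the own position and the observed position of the other
  robot (both in the robot's local coordinate system of the current cycle) and the
  random bits of the current cycle, compute the destination (local coordinates).\<close>
type_synonym algo = "complex \<Rightarrow> complex \<Rightarrow> bits \<Rightarrow> complex"

text \<open>Local coordinate systems: arbitrary similarities of the plane
  (translation, rotation, scaling, possibly reflection).\<close>
definition similarity :: "(complex \<Rightarrow> complex) \<Rightarrow> bool" where
  "similarity f \<longleftrightarrow> (\<exists>a b. a \<noteq> 0 \<and>
      ((\<forall>z. f z = a * z + b) \<or> (\<forall>z. f z = a * cnj z + b)))"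

text \<open>State of one robot: time of its last look (= start of its last move),
  start point and destination of its last move, number of completed cycles, and
  whether it has decided that it gathered.\<close>
record rstate =
  lastlook :: real
  startp :: complex
  dest :: complex
  ncyc :: nat
  stopped :: bool

definition init_state :: "complex \<Rightarrow> rstate" where
  "init_state p = \<lparr>lastlook = 0, startp = p, dest = p, ncyc = 0, stopped = False\<rparr>"

definition rpos :: "real \<Rightarrow> rstate \<Rightarrow> real \<Rightarrow> complex" where
  "rpos v s t = startp s +
     of_real (min 1 ((t - lastlook s) * v / cmod (dest s - startp s))) * (dest s - startp s)"

definition next_look :: "real \<Rightarrow> (nat \<Rightarrow> real) \<Rightarrow> rstate \<Rightarrow> real" where
  "next_look v W s = lastlook s + cmod (dest s - startp s) / v + W (ncyc s)"

text \<open>A look (with immediate start of the move, since the computation delay is 0),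
  given the observed global position q of the other robot. F k is the map from
  global to local coordinates in cycle k, r k the random bits of cycle k.\<close>
definition do_look :: "algo \<Rightarrow> real \<Rightarrow> (nat \<Rightarrow> real) \<Rightarrow> (nat \<Rightarrow> complex \<Rightarrow> complex)
    \<Rightarrow> (nat \<Rightarrow> bits) \<Rightarrow> rstate \<Rightarrow> complex \<Rightarrow> rstate" where
  "do_look A v W F r s q =
    (let t = next_look v W s; x = dest s; k = ncyc s in
     if q = x then s\<lparr>lastlook := t, startp := x, dest := x, stopped := True\<rparr>
     else s\<lparr>lastlook := t, startp := x,
            dest := inv (F k) (A (F k x) (F k q) (r k)), ncyc := Suc k\<rparr>)"

text \<open>One event of the execution: the pending look that happens first in time
  (ties broken in favour of robot True; with zero computation delay this is
  consistent, as a robot is still at its start point at its look instant).\<close>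
definition exec_step :: "algo \<Rightarrow> real \<Rightarrow> (bool \<Rightarrow> nat \<Rightarrow> real)
    \<Rightarrow> (bool \<Rightarrow> nat \<Rightarrow> complex \<Rightarrow> complex) \<Rightarrow> (bool \<Rightarrow> nat \<Rightarrow> bits)
    \<Rightarrow> rstate \<times> rstate \<Rightarrow> rstate \<times> rstate" where
  "exec_step A v W F r st =
    (let s1 = fst st; s2 = snd st in
     if stopped s1 \<and> stopped s2 then st
     else if \<not> stopped s1 \<and> (stopped s2 \<or> next_look v (W True) s1 \<le> next_look v (W False) s2)
     then (do_look A v (W True) (F True) (r True) s1 (rpos v s2 (next_look v (W True) s1)), s2)
     else (s1, do_look A v (W False) (F False) (r False) s2 (rpos v s1 (next_look v (W False) s2))))"

definition execution :: "algo \<Rightarrow> real \<Rightarrow> (bool \<Rightarrow> nat \<Rightarrow> real)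
    \<Rightarrow> (bool \<Rightarrow> nat \<Rightarrow> complex \<Rightarrow> complex) \<Rightarrow> (bool \<Rightarrow> nat \<Rightarrow> bits)
    \<Rightarrow> complex \<Rightarrow> complex \<Rightarrow> nat \<Rightarrow> rstate \<times> rstate" where
  "execution A v W F r p1 p2 n = (exec_step A v W F r ^^ n) (init_state p1, init_state p2)"

definition gathered :: "algo \<Rightarrow> real \<Rightarrow> (bool \<Rightarrow> nat \<Rightarrow> real)
    \<Rightarrow> (bool \<Rightarrow> nat \<Rightarrow> complex \<Rightarrow> complex) \<Rightarrow> (bool \<Rightarrow> nat \<Rightarrow> bits)
    \<Rightarrow> complex \<Rightarrow> complex \<Rightarrow> bool" where
  "gathered A v W F r p1 p2 \<longleftrightarrow>
    (\<exists>n. let st = execution A v W F r p1 p2 n in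
       stopped (fst st) \<and> stopped (snd st) \<and> dest (fst st) = dest (snd st))"

text \<open>Random bits: independent fair coins, indexed by robot, cycle, bit number.\<close>
definition coin_space :: "(bool \<times> nat \<times> nat \<Rightarrow> bool) measure" where
  "coin_space = (\<Pi>\<^sub>M i\<in>UNIV. measure_pmf (bernoulli_pmf (1/2)))"

definition bits_of :: "(bool \<times> nat \<times> nat \<Rightarrow> bool) \<Rightarrow> bool \<Rightarrow> nat \<Rightarrow> bits" where
  "bits_of \<omega> i k j = \<omega> (i, k, j)"

end

theory Submission
  imports Defs
begin

definition sel :: "rstate \<times> rstate \<Rightarrow> bool \<Rightarrow> rstate" where
  "sel st i = (if i then fst st else snd st)"
definition upd :: "rstate \<times> rstate \<Rightarrow> bool \<Rightarrow> rstate \<Rightarrow> rstate \<times> rstate" where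
  "upd st i s = (if i then (s, snd st) else (fst st, s))"

lemma sel_upd_same[simp]: "sel (upd st i s) i = s"
  by (cases i) (auto simp: sel_def upd_def)
lemma sel_upd_other[simp]: "sel (upd st i s) (\<not> i) = sel st (\<not> i)"
  by (cases i) (auto simp: sel_def upd_def)

lemma exec_step_pick:
  assumes "\<not> stopped (sel st j)"
    and "stopped (sel st (\<not>j)) \<or> next_look v (W j) (sel st j) < next_look v (W (\<not>j)) (sel st (\<not>j))
         \<or> (j \<and> next_look v (W j) (sel st j) \<le> next_look v (W (\<not>j)) (sel st (\<not>j)))"
  shows "exec_step A v W F r st = upd st j (do_look A v (W j) (F j) (r j) (sel st j)
            (rpos v (sel st (\<not>j)) (next_look v (W j) (sel st j))))"
  using assms by (cases st; cases j) (auto simp: exec_step_def sel_def upd_def Let_def)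

lemma exec_step_some:
  assumes "\<not> (stopped (sel st True) \<and> stopped (sel st False))"
  shows "\<exists>j. \<not> stopped (sel st j) \<and> (stopped (sel st (\<not>j)) \<or>
      next_look v (W j) (sel st j) \<le> next_look v (W (\<not>j)) (sel st (\<not>j))) \<and>
      exec_step A v W F r st = upd st j (do_look A v (W j) (F j) (r j) (sel st j)
            (rpos v (sel st (\<not>j)) (next_look v (W j) (sel st j))))"
proof (cases "\<not> stopped (fst st) \<and> (stopped (snd st) \<or> next_look v (W True) (fst st) \<le> next_look v (W False) (snd st))")
  case True
  then show ?thesis
    by (intro exI[of _ True]) (cases st, auto simp: exec_step_def sel_def upd_def Let_def)
next
  case False
  then show ?thesis using assms
    by (intro exI[of _ False]) (cases st, auto simp: exec_step_def sel_def upd_def Let_def)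
qed

definition decq :: "bits \<Rightarrow> rat" where
  "decq b = from_nat (LEAST n. \<not> b n)"

definition cf :: "bits \<Rightarrow> complex" where
  "cf b = complex_of_real (real_of_rat (decq b))"

definition algA :: algo where
  "algA x q b = x + cf b * (q - x)"

lemma sim_algA:
  assumes "similarity G"
  shows "inv G (algA (G x) (G q) b) = x + cf b * (q - x)"
proof -
  obtain a c where a: "a \<noteq> 0" and G: "(\<forall>z. G z = a * z + c) \<or> (\<forall>z. G z = a * cnj z + c)"
    using assms unfolding similarity_def by blast
  have inj: "inj G"
    using G a by (auto simp: inj_def)
  have cr: "cnj (cf b) = cf b" by (simp add: cf_def)
  have "algA (G x) (G q) b = G (x + cf b * (q - x))"
    using G
  proof
    assume "\<forall>z. G z = a * z + c" then show ?thesis by (simp add: algA_def algebra_simps)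
  next
    assume "\<forall>z. G z = a * cnj z + c" then show ?thesis by (simp add: algA_def algebra_simps cr)
  qed
  then show ?thesis using inj by (simp add: inv_f_f)
qed

lemma do_look_alg:
  assumes "similarity (G (ncyc s))"
  shows "do_look algA v W G r s q = (if q = dest s then
     s\<lparr>lastlook := next_look v W s, startp := dest s, dest := dest s, stopped := True\<rparr>
   else s\<lparr>lastlook := next_look v W s, startp := dest s,
      dest := dest s + cf (r (ncyc s)) * (q - dest s), ncyc := Suc (ncyc s)\<rparr>)"
  using sim_algA[OF assms] by (simp add: do_look_def Let_def)

lemma rpos_stat: "startp s = dest s \<Longrightarrow> rpos v s t = dest s"
  by (simp add: rpos_def)

lemma rpos_arrived:
  assumes "v > 0" "t \<ge> lastlook s + cmod (dest s - startp s) / v"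
  shows "rpos v s t = dest s"
proof (cases "dest s = startp s")
  case True then show ?thesis by (simp add: rpos_def)
next
  case False
  then have d: "cmod (dest s - startp s) > 0" by simp
  from assms have "(t - lastlook s) \<ge> cmod (dest s - startp s) / v" by simp
  then have "(t - lastlook s) * v \<ge> cmod (dest s - startp s)"
    using assms(1) by (simp add: field_simps)
  then have "(t - lastlook s) * v / cmod (dest s - startp s) \<ge> 1"
    using d by (simp add: field_simps)
  then show ?thesis by (simp add: rpos_def min_def)
qed

lemma rpos_moving:
  assumes "v > 0" "lastlook s \<le> t" "t < lastlook s + cmod (dest s - startp s) / v"
  shows "rpos v s t \<noteq> dest s"
proof -
  have d: "cmod (dest s - startp s) > 0" using assms by auto
  have "(t - lastlook s) * v < cmod (dest s - startp s)"
    using assms by (simp add: field_simps)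
  then have lt: "(t - lastlook s) * v / cmod (dest s - startp s) < 1"
    using d by (simp add: field_simps)
  define th where "th = (t - lastlook s) * v / cmod (dest s - startp s)"
  have lt': "th < 1" using lt by (simp add: th_def)
  have "rpos v s t = startp s + of_real th * (dest s - startp s)"
    using lt by (simp add: rpos_def min_def th_def)
  moreover have "startp s + of_real th * (dest s - startp s) \<noteq> dest s"
  proof
    assume "startp s + of_real th * (dest s - startp s) = dest s"
    then have "(of_real th - 1) * (dest s - startp s) = 0" by (simp add: algebra_simps)
    then have "of_real th - (1::complex) = 0 \<or> dest s - startp s = 0" by (simp only: mult_eq_0_iff)
    then have "complex_of_real th = 1" using d by auto
    then have "th = 1" by (simp only: of_real_eq_1_iff)
    then show False using lt' by simp
  qed
  ultimately show ?thesis by simp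
qed

lemma rpos_seg:
  assumes "v > 0" "lastlook s \<le> t"
  shows "\<exists>th. 0 \<le> th \<and> th \<le> 1 \<and> rpos v s t = startp s + of_real th * (dest s - startp s)"
proof -
  let ?th = "min 1 ((t - lastlook s) * v / cmod (dest s - startp s))"
  have "0 \<le> ?th" using assms by auto
  then show ?thesis by (intro exI[of _ ?th]) (auto simp: rpos_def)
qed

lemma rpos_at_start:
  "rpos v s (lastlook s) = startp s"
  by (simp add: rpos_def)

definition gl :: "rstate \<times> rstate \<Rightarrow> bool" where
  "gl st \<longleftrightarrow> stopped (fst st) \<and> stopped (snd st) \<and> dest (fst st) = dest (snd st)"

locale fp =
  fixes v :: real and W :: "bool \<Rightarrow> nat \<Rightarrow> real" and G :: "bool \<Rightarrow> nat \<Rightarrow> complex \<Rightarrow> complex"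
    and r :: "bool \<Rightarrow> nat \<Rightarrow> bits" and j :: bool and PF PL :: complex
    and \<gamma> e AF :: real and f :: "nat \<Rightarrow> real" and n k0 kL :: nat
  assumes vpos: "v > 0"
    and Wnn: "\<And>i k. W i k \<ge> 0"
    and simG: "\<And>i k. similarity (G i k)"
    and PFL: "PF \<noteq> PL"
    and e_def: "e = cmod (PF - PL) / v"
    and AFg: "AF \<le> \<gamma>"
    and fSuc: "\<And>k. f (Suc k) = f k + W j (Suc k)"
    and fn: "f n \<ge> \<gamma> + e"
    and bitsF: "\<And>k. k0 \<le> k \<Longrightarrow> k < n \<Longrightarrow> decq (r j k) = 0"
    and bitsL: "decq (r (\<not> j) kL) = 1"
begin

lemma epos: "e > 0"
  using PFL vpos by (simp add: e_def)

lemma fmono: "k \<le> m \<Longrightarrow> f k \<le> f m"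
proof (induction m)
  case 0 then show ?case by simp
next
  case (Suc m)
  then show ?case
    using fSuc[of m] Wnn[of j "Suc m"] by (cases "k = Suc m") auto
qed

definition Finv :: "rstate \<Rightarrow> bool" where
  "Finv sF \<longleftrightarrow> (stopped sF \<and> startp sF = PF \<and> dest sF = PF) \<or>
     (\<not> stopped sF \<and> dest sF = PF \<and> k0 \<le> ncyc sF \<and> ncyc sF \<le> n \<and>
      next_look v (W j) sF = f (ncyc sF) \<and> (\<forall>t\<ge>AF. rpos v sF t = PF))"

definition Linv :: "rstate \<Rightarrow> rstate \<Rightarrow> bool" where
  "Linv sF sL \<longleftrightarrow>
    (\<not> stopped sL \<and> ncyc sL = kL \<and> dest sL = PL \<and> next_look v (W (\<not> j)) sL = \<gamma> \<and>
       (\<forall>t\<ge>lastlook sL. rpos v sL t \<noteq> PF) \<and> (\<not> stopped sF \<longrightarrow> lastlook sL \<le> next_look v (W j) sF)) \<or>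
    (\<not> stopped sL \<and> startp sL = PL \<and> dest sL = PF \<and> lastlook sL = \<gamma> \<and>
       \<gamma> + e \<le> next_look v (W (\<not> j)) sL \<and> (\<not> stopped sF \<longrightarrow> \<gamma> \<le> next_look v (W j) sF)) \<or>
    (stopped sL \<and> startp sL = PF \<and> dest sL = PF)"

definition Inv :: "rstate \<times> rstate \<Rightarrow> bool" where
  "Inv st \<longleftrightarrow> Finv (sel st j) \<and> Linv (sel st j) (sel st (\<not> j))"

definition mu :: "rstate \<times> rstate \<Rightarrow> nat" where
  "mu st = (if stopped (sel st j) then 0 else Suc n - ncyc (sel st j)) +
     (if stopped (sel st (\<not> j)) then 0 else if dest (sel st (\<not> j)) = PF then 1 else 2)"

lemma F_pos:
  assumes "Finv sF" "t \<ge> AF"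
  shows "rpos v sF t = PF"
  using assms by (auto simp: Finv_def rpos_stat)

lemma step_F:
  assumes inv: "Inv st" and ns: "\<not> stopped (sel st j)"
    and ord: "stopped (sel st (\<not>j)) \<or> next_look v (W j) (sel st j) \<le> next_look v (W (\<not>j)) (sel st (\<not>j))"
  defines "st' \<equiv> upd st j (do_look algA v (W j) (G j) (r j) (sel st j)
            (rpos v (sel st (\<not>j)) (next_look v (W j) (sel st j))))"
  shows "Inv st' \<and> mu st' < mu st"
proof -
  define sF where "sF = sel st j"
  define sL where "sL = sel st (\<not> j)"
  define k where "k = ncyc sF"
  define \<tau> where "\<tau> = next_look v (W j) sF"
  define q where "q = rpos v sL \<tau>"
  have FI: "dest sF = PF" "k0 \<le> k" "k \<le> n" "\<tau> = f k" "\<forall>t\<ge>AF. rpos v sF t = PF"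
    using inv ns unfolding Inv_def Finv_def sF_def k_def \<tau>_def by auto
  have LI: "Linv sF sL" using inv unfolding Inv_def sF_def sL_def by simp
  have dl: "do_look algA v (W j) (G j) (r j) sF q = (if q = dest sF then
     sF\<lparr>lastlook := \<tau>, startp := dest sF, dest := dest sF, stopped := True\<rparr>
   else sF\<lparr>lastlook := \<tau>, startp := dest sF,
      dest := dest sF + cf (r j k) * (q - dest sF), ncyc := Suc k\<rparr>)"
    using do_look_alg[OF simG] unfolding \<tau>_def k_def by simp
  have st'_eq: "st' = upd st j (do_look algA v (W j) (G j) (r j) sF q)"
    unfolding st'_def q_def \<tau>_def sF_def sL_def by simp
  have stay: "Inv st' \<and> mu st' < mu st" if qne: "q \<noteq> PF" and kn: "k < n"
     and Lok: "Linv (sF\<lparr>lastlook := \<tau>, startp := PF, dest := PF, ncyc := Suc k\<rparr>) sL"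
  proof -
    have c0: "cf (r j k) = 0" using bitsF[OF FI(2) kn] by (simp add: cf_def)
    define sF' where "sF' = sF\<lparr>lastlook := \<tau>, startp := PF, dest := PF, ncyc := Suc k\<rparr>"
    have st'e: "st' = upd st j sF'"
      using st'_eq dl qne FI(1) c0 unfolding sF'_def by simp
    have e1: "sel st' j = sF'" and e2: "sel st' (\<not> j) = sL"
      unfolding st'e sL_def by simp_all
    have "Finv sF'"
      using ns kn FI fSuc[of k] unfolding Finv_def sF'_def sF_def
      by (auto simp: next_look_def rpos_stat)
    moreover have "Linv sF' sL" using Lok unfolding sF'_def .
    ultimately have "Inv st'" unfolding Inv_def e1 e2 by simp
    moreover have "mu st' < mu st"
    proof -
      have "\<not> stopped sF'" "ncyc sF' = Suc k" "\<not> stopped sF" "ncyc sF = k"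
        using ns unfolding sF'_def sF_def k_def by simp_all
      then show ?thesis using kn unfolding mu_def e1 e2 sF_def[symmetric] sL_def[symmetric] by simp
    qed
    ultimately show ?thesis by blast
  qed
  have stop: "Inv st' \<and> mu st' < mu st" if qe: "q = PF"
  proof -
    define sF' where "sF' = sF\<lparr>lastlook := \<tau>, startp := PF, dest := PF, stopped := True\<rparr>"
    have st'e: "st' = upd st j sF'"
      using st'_eq dl qe FI(1) unfolding sF'_def by simp
    have e1: "sel st' j = sF'" and e2: "sel st' (\<not> j) = sL"
      unfolding st'e sL_def by simp_all
    have "Finv sF'" unfolding Finv_def sF'_def by simp
    moreover have "Linv sF' sL"
      using LI unfolding Linv_def sF'_def by auto
    ultimately have "Inv st'" unfolding Inv_def e1 e2 by simp
    moreover have "mu st' < mu st"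
    proof -
      have "stopped sF'" "\<not> stopped sF" "ncyc sF \<le> n"
        using ns FI(3) unfolding sF'_def sF_def k_def by simp_all
      then show ?thesis unfolding mu_def e1 e2 sF_def[symmetric] sL_def[symmetric] by simp
    qed
    ultimately show ?thesis by blast
  qed
  have fle: "f k \<le> f (Suc k)" using fSuc[of k] Wnn[of j "Suc k"] by simp
  have nls: "next_look v (W j) (sF\<lparr>lastlook := \<tau>, startp := PF, dest := PF, ncyc := Suc k\<rparr>) = f (Suc k)"
    using FI(4) fSuc[of k] by (simp add: next_look_def)
  from LI consider
    (P0) "\<not> stopped sL" "ncyc sL = kL" "dest sL = PL" "next_look v (W (\<not> j)) sL = \<gamma>"
       "\<forall>t\<ge>lastlook sL. rpos v sL t \<noteq> PF" "lastlook sL \<le> \<tau>"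
  | (P1) "\<not> stopped sL" "startp sL = PL" "dest sL = PF" "lastlook sL = \<gamma>"
       "\<gamma> + e \<le> next_look v (W (\<not> j)) sL" "\<gamma> \<le> \<tau>"
  | (P2) "stopped sL" "startp sL = PF" "dest sL = PF"
    using ns unfolding Linv_def sF_def \<tau>_def by blast
  then show ?thesis
  proof cases
    case P0
    have "\<tau> \<le> \<gamma>" using ord P0 unfolding sF_def sL_def \<tau>_def by auto
    have kn: "k < n"
    proof (rule ccontr)
      assume "\<not> k < n"
      then have "f n \<le> f k" using fmono by simp
      then show False using fn epos \<open>\<tau> \<le> \<gamma>\<close> FI(4) by linarith
    qed
    have "q \<noteq> PF" using P0 unfolding q_def by auto
    moreover have "Linv (sF\<lparr>lastlook := \<tau>, startp := PF, dest := PF, ncyc := Suc k\<rparr>) sL"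
      using P0 fle FI(4) ns nls unfolding Linv_def sF_def by auto
    ultimately show ?thesis using stay kn by blast
  next
    case P1
    show ?thesis
    proof (cases "\<tau> < \<gamma> + e")
      case True
      have kn: "k < n"
      proof (rule ccontr)
        assume "\<not> k < n"
        then have "f n \<le> f k" using fmono by simp
        then show False using fn True FI(4) by linarith
      qed
      have "q \<noteq> PF"
        unfolding q_def using rpos_moving[OF vpos, of sL \<tau>] P1 True e_def by (simp add: norm_minus_commute)
      moreover have "Linv (sF\<lparr>lastlook := \<tau>, startp := PF, dest := PF, ncyc := Suc k\<rparr>) sL"
        using P1 fle FI(4) ns nls unfolding Linv_def sF_def by auto
      ultimately show ?thesis using stay kn by blast
    next
      case False
      have "q = PF"
        unfolding q_def using rpos_arrived[OF vpos, of sL \<tau>] P1 False e_def by (simp add: norm_minus_commute)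
      then show ?thesis using stop by blast
    qed
  next
    case P2
    then have "q = PF" unfolding q_def by (simp add: rpos_stat)
    then show ?thesis using stop by blast
  qed
qed

lemma step_L:
  assumes inv: "Inv st" and ns: "\<not> stopped (sel st (\<not>j))"
    and ord: "stopped (sel st j) \<or> next_look v (W (\<not>j)) (sel st (\<not>j)) \<le> next_look v (W j) (sel st j)"
  defines "st' \<equiv> upd st (\<not>j) (do_look algA v (W (\<not>j)) (G (\<not>j)) (r (\<not>j)) (sel st (\<not>j))
            (rpos v (sel st j) (next_look v (W (\<not>j)) (sel st (\<not>j)))))"
  shows "Inv st' \<and> mu st' < mu st"
proof -
  define sF where "sF = sel st j"
  define sL where "sL = sel st (\<not> j)"
  define \<tau> where "\<tau> = next_look v (W (\<not>j)) sL"
  define q where "q = rpos v sF \<tau>"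
  have FI: "Finv sF" using inv unfolding Inv_def sF_def by simp
  have LI: "Linv sF sL" using inv unfolding Inv_def sF_def sL_def by simp
  have dl: "do_look algA v (W (\<not>j)) (G (\<not>j)) (r (\<not>j)) sL q = (if q = dest sL then
     sL\<lparr>lastlook := \<tau>, startp := dest sL, dest := dest sL, stopped := True\<rparr>
   else sL\<lparr>lastlook := \<tau>, startp := dest sL,
      dest := dest sL + cf (r (\<not>j) (ncyc sL)) * (q - dest sL), ncyc := Suc (ncyc sL)\<rparr>)"
    using do_look_alg[OF simG] unfolding \<tau>_def by simp
  have st'_eq: "st' = upd st (\<not>j) (do_look algA v (W (\<not>j)) (G (\<not>j)) (r (\<not>j)) sL q)"
    unfolding st'_def q_def \<tau>_def sF_def sL_def by simp
  from LI consider
    (P0) "\<not> stopped sL" "ncyc sL = kL" "dest sL = PL" "\<tau> = \<gamma>"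
  | (P1) "\<not> stopped sL" "startp sL = PL" "dest sL = PF" "lastlook sL = \<gamma>"
       "\<gamma> + e \<le> \<tau>"
  | (P2) "stopped sL"
    unfolding Linv_def \<tau>_def by blast
  then show ?thesis
  proof cases
    case P0
    have qF: "q = PF" unfolding q_def using F_pos[OF FI] AFg P0(4) by simp
    have c1: "cf (r (\<not>j) kL) = 1" using bitsL by (simp add: cf_def)
    define sL' where "sL' = sL\<lparr>lastlook := \<gamma>, startp := PL, dest := PF, ncyc := Suc kL\<rparr>"
    have st'e: "st' = upd st (\<not>j) sL'"
      using st'_eq dl qF P0 PFL c1 unfolding sL'_def by auto
    have e1: "sel st' j = sF" and e2: "sel st' (\<not> j) = sL'"
      unfolding st'e sF_def using sel_upd_other[of st "\<not>j" sL'] by simp_all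
    have nl': "next_look v (W (\<not>j)) sL' = \<gamma> + e + W (\<not>j) (Suc kL)"
      unfolding sL'_def e_def by (simp add: next_look_def norm_minus_commute)
    have "\<not> stopped sF \<longrightarrow> \<gamma> \<le> next_look v (W j) sF"
      using ord P0 unfolding sF_def sL_def \<tau>_def by auto
    then have "Linv sF sL'"
      unfolding Linv_def using nl' Wnn[of "\<not>j" "Suc kL"] P0 unfolding sL'_def by simp
    then have "Inv st'" unfolding Inv_def e1 e2 using FI by simp
    moreover have "mu st' < mu st"
      unfolding mu_def e1 e2 sF_def[symmetric] sL_def[symmetric] using P0 PFL unfolding sL'_def by simp
    ultimately show ?thesis by blast
  next
    case P1
    have "AF \<le> \<tau>" using AFg epos P1(5) by linarith
    then have qF: "q = PF" unfolding q_def using F_pos[OF FI] by simp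
    define sL' where "sL' = sL\<lparr>lastlook := \<tau>, startp := PF, dest := PF, stopped := True\<rparr>"
    have st'e: "st' = upd st (\<not>j) sL'"
      using st'_eq dl qF P1 unfolding sL'_def by auto
    have e1: "sel st' j = sF" and e2: "sel st' (\<not> j) = sL'"
      unfolding st'e sF_def using sel_upd_other[of st "\<not>j" sL'] by simp_all
    have "Linv sF sL'" unfolding Linv_def sL'_def by simp
    then have "Inv st'" unfolding Inv_def e1 e2 using FI by simp
    moreover have "mu st' < mu st"
      unfolding mu_def e1 e2 sF_def[symmetric] sL_def[symmetric] using P1 unfolding sL'_def by simp
    ultimately show ?thesis by blast
  next
    case P2
    then show ?thesis using ns unfolding sL_def by simp
  qed
qed

lemma FP_main: "Inv st \<Longrightarrow> \<exists>m. gl ((exec_step algA v W G r ^^ m) st)"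
proof (induction "mu st" arbitrary: st rule: less_induct)
  case less
  show ?case
  proof (cases "stopped (sel st True) \<and> stopped (sel st False)")
    case True
    then have "stopped (sel st j)" "stopped (sel st (\<not> j))" by (cases j; simp)+
    then have "dest (sel st j) = PF" "dest (sel st (\<not> j)) = PF"
      using less.prems unfolding Inv_def Finv_def Linv_def by auto
    then have "gl st" using True unfolding gl_def sel_def by (cases j) auto
    then show ?thesis by (intro exI[of _ 0]) simp
  next
    case False
    from exec_step_some[OF False, of v W algA G r] obtain j' where
      j': "\<not> stopped (sel st j')" "stopped (sel st (\<not>j')) \<or>
      next_look v (W j') (sel st j') \<le> next_look v (W (\<not>j')) (sel st (\<not>j'))"
      "exec_step algA v W G r st = upd st j' (do_look algA v (W j') (G j') (r j') (sel st j')
            (rpos v (sel st (\<not>j')) (next_look v (W j') (sel st j'))))" by blast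
    have "Inv (exec_step algA v W G r st) \<and> mu (exec_step algA v W G r st) < mu st"
    proof (cases "j' = j")
      case True
      then show ?thesis using step_F[OF less.prems] j' by simp
    next
      case False
      then have "j' = (\<not> j)" by auto
      then show ?thesis using step_L[OF less.prems] j' by simp
    qed
    then obtain m where "gl ((exec_step algA v W G r ^^ m) (exec_step algA v W G r st))"
      using less.hyps by blast
    then show ?thesis by (intro exI[of _ "Suc m"]) (simp only: funpow_Suc_right comp_apply)
  qed
qed

end

lemma sel_upd_other2[simp]: "sel (upd st (\<not> i) s) i = sel st i"
  by (cases i) (auto simp: sel_def upd_def)

lemma sel_upd: "sel (upd st i s) k = (if k = i then s else sel st k)"
  by (cases i; cases k) (auto simp: sel_def upd_def)

definition cr :: "rat \<Rightarrow> complex" where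
  "cr c = complex_of_real (real_of_rat c)"

lemma cf_cr: "cf b = cr (decq b)" by (simp add: cf_def cr_def)

lemma Fin2:
  assumes vpos: "v > 0" and simG: "\<And>i k. similarity (G i k)"
    and H: "\<And>i. \<not> stopped (sel st i) \<and> dest (sel st i) = M \<and> (\<forall>t\<ge>T1. rpos v (sel st i) t = M)
             \<and> next_look v (W i) (sel st i) \<ge> T1"
  shows "gl ((exec_step algA v W G r ^^ 2) st)"
proof -
  have nb: "\<not> (stopped (sel st True) \<and> stopped (sel st False))" using H by auto
  from exec_step_some[OF nb, of v W algA G r] obtain j where
    j: "exec_step algA v W G r st = upd st j (do_look algA v (W j) (G j) (r j) (sel st j)
            (rpos v (sel st (\<not>j)) (next_look v (W j) (sel st j))))" by blast
  have q: "rpos v (sel st (\<not>j)) (next_look v (W j) (sel st j)) = M" using H[of j] H[of "\<not>j"] by auto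
  define s1 where "s1 = (sel st j)\<lparr>lastlook := next_look v (W j) (sel st j), startp := M, dest := M, stopped := True\<rparr>"
  have st1: "exec_step algA v W G r st = upd st j s1"
    unfolding j s1_def using do_look_alg[OF simG] q H[of j] by simp
  let ?st1 = "upd st j s1"
  have nb1: "\<not> (stopped (sel ?st1 True) \<and> stopped (sel ?st1 False))"
    using H[of "\<not>j"] by (cases j) (auto simp: sel_upd)
  from exec_step_some[OF nb1, of v W algA G r] obtain j2 where
    j2: "\<not> stopped (sel ?st1 j2)" "exec_step algA v W G r ?st1 = upd ?st1 j2 (do_look algA v (W j2) (G j2) (r j2) (sel ?st1 j2)
            (rpos v (sel ?st1 (\<not>j2)) (next_look v (W j2) (sel ?st1 j2))))" by blast
  have "j2 = (\<not> j)" using j2(1) unfolding s1_def by (cases "j2 = j") auto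
  then have j2': "exec_step algA v W G r ?st1 = upd ?st1 (\<not>j) (do_look algA v (W (\<not>j)) (G (\<not>j)) (r (\<not>j)) (sel st (\<not>j))
            (rpos v s1 (next_look v (W (\<not>j)) (sel st (\<not>j)))))"
    using j2(2) by simp
  have q2: "rpos v s1 (next_look v (W (\<not>j)) (sel st (\<not>j))) = M"
    unfolding s1_def by (simp add: rpos_stat)
  define s2 where "s2 = (sel st (\<not>j))\<lparr>lastlook := next_look v (W (\<not>j)) (sel st (\<not>j)), startp := M, dest := M, stopped := True\<rparr>"
  have st2: "exec_step algA v W G r ?st1 = upd ?st1 (\<not>j) s2"
    unfolding j2' s2_def using do_look_alg[OF simG] q2 H[of "\<not>j"] by simp
  have "(exec_step algA v W G r ^^ 2) st = upd ?st1 (\<not>j) s2"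
    using st1 st2 by (simp add: numeral_2_eq_2)
  moreover have "gl (upd ?st1 (\<not>j) s2)"
    unfolding gl_def s1_def s2_def by (cases j) (simp_all add: sel_def upd_def)
  ultimately show ?thesis by simp
qed

lemma cr_half: "cr (1/2) = 1/2" by (simp add: cr_def of_rat_divide)
lemma cr_one: "cr 1 = 1" by (simp add: cr_def)
lemma cr_zero: "cr 0 = 0" by (simp add: cr_def)

lemma mid_finish:
  assumes vpos: "v > 0" and Wnn: "\<And>i k. W i k \<ge> 0" and simG: "\<And>i k. similarity (G i k)"
    and H: "\<And>i. \<not> stopped (sel st i) \<and> next_look v (W i) (sel st i) = T \<and>
         (\<forall>t\<ge>T. rpos v (sel st i) t = dest (sel st i)) \<and> decq (r i (ncyc (sel st i))) = 1/2"
    and ne: "dest (sel st True) \<noteq> dest (sel st False)"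
  shows "\<exists>m. gl ((exec_step algA v W G r ^^ m) st)"
proof -
  have nb: "\<not> (stopped (sel st True) \<and> stopped (sel st False))" using H by auto
  from exec_step_some[OF nb, of v W algA G r] obtain Z where
    Z: "exec_step algA v W G r st = upd st Z (do_look algA v (W Z) (G Z) (r Z) (sel st Z)
            (rpos v (sel st (\<not>Z)) (next_look v (W Z) (sel st Z))))" by blast
  define PZ where "PZ = dest (sel st Z)"
  define PO where "PO = dest (sel st (\<not>Z))"
  have neZ: "PO \<noteq> PZ" using ne unfolding PZ_def PO_def by (cases Z) auto
  define M where "M = PZ + 1/2 * (PO - PZ)"
  have q: "rpos v (sel st (\<not>Z)) (next_look v (W Z) (sel st Z)) = PO"
    using H[of Z] H[of "\<not>Z"] unfolding PO_def by auto
  define sZ where "sZ = (sel st Z)\<lparr>lastlook := T, startp := PZ, dest := M, ncyc := Suc (ncyc (sel st Z))\<rparr>"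
  have dZ0: "decq (r Z (ncyc (sel st Z))) = 1/2" using H[of Z] by blast
  have dZ: "cf (r Z (ncyc (sel st Z))) = 1/2" by (simp only: cf_cr dZ0 cr_half)
  have st1: "exec_step algA v W G r st = upd st Z sZ"
    unfolding Z sZ_def using do_look_alg[of "G Z" "sel st Z", OF simG] q H[of Z] neZ
    by (simp add: dZ PZ_def[symmetric] M_def)
  let ?st1 = "upd st Z sZ"
  have cM: "cmod (M - PZ) = cmod (PO - PZ) / 2"
    unfolding M_def by (simp add: norm_mult)
  have cM2: "cmod (M - PO) = cmod (PO - PZ) / 2"
  proof -
    have "M - PO = -(1/2) * (PO - PZ)" unfolding M_def by (simp add: algebra_simps)
    then show ?thesis by (simp add: norm_mult)
  qed
  have dpos: "cmod (PO - PZ) > 0" using neZ by simp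
  have nlZ: "next_look v (W Z) sZ = T + cmod (PO - PZ) / 2 / v + W Z (Suc (ncyc (sel st Z)))"
    unfolding sZ_def next_look_def by (simp add: cM)
  have nlZgt: "next_look v (W Z) sZ > T"
    using nlZ dpos vpos Wnn[of Z "Suc (ncyc (sel st Z))"] by (simp add: add_pos_nonneg)
  have nb1: "\<not> (stopped (sel ?st1 True) \<and> stopped (sel ?st1 False))"
    using H[of "\<not>Z"] by (cases Z) (auto simp: sel_upd)
  from exec_step_some[OF nb1, of v W algA G r] obtain j2 where
    j2: "stopped (sel ?st1 (\<not>j2)) \<or>
      next_look v (W j2) (sel ?st1 j2) \<le> next_look v (W (\<not>j2)) (sel ?st1 (\<not>j2))"
      "exec_step algA v W G r ?st1 = upd ?st1 j2 (do_look algA v (W j2) (G j2) (r j2) (sel ?st1 j2)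
            (rpos v (sel ?st1 (\<not>j2)) (next_look v (W j2) (sel ?st1 j2))))" by blast
  have "j2 \<noteq> Z"
  proof
    assume "j2 = Z"
    then show False using j2(1) nlZgt H[of "\<not>Z"] by simp
  qed
  then have j2Z: "j2 = (\<not> Z)" by auto
  have q2: "rpos v sZ (next_look v (W (\<not>Z)) (sel st (\<not>Z))) = PZ"
    using H[of "\<not>Z"] rpos_at_start[of v sZ] unfolding sZ_def by simp
  define sO where "sO = (sel st (\<not>Z))\<lparr>lastlook := T, startp := PO, dest := M, ncyc := Suc (ncyc (sel st (\<not>Z)))\<rparr>"
  have MO: "PO + 1/2 * (PZ - PO) = M" unfolding M_def by (simp add: field_simps)
  have dO0: "decq (r (\<not>Z) (ncyc (sel st (\<not>Z)))) = 1/2" using H[of "\<not>Z"] by blast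
  have dO: "cf (r (\<not>Z) (ncyc (sel st (\<not>Z)))) = 1/2" by (simp only: cf_cr dO0 cr_half)
  have st2: "exec_step algA v W G r ?st1 = upd ?st1 (\<not>Z) sO"
    using j2(2) unfolding j2Z sO_def using do_look_alg[of "G (\<not>Z)" "sel st (\<not>Z)", OF simG] q2 H[of "\<not>Z"] neZ MO
    by (simp add: dO PO_def[symmetric])
  let ?st2 = "upd ?st1 (\<not>Z) sO"
  have nlO: "next_look v (W (\<not>Z)) sO = T + cmod (PO - PZ) / 2 / v + W (\<not>Z) (Suc (ncyc (sel st (\<not>Z))))"
    unfolding sO_def next_look_def by (simp add: cM2)
  define T1 where "T1 = T + cmod (PO - PZ) / 2 / v"
  have "gl ((exec_step algA v W G r ^^ 2) ?st2)"
  proof (rule Fin2[OF vpos simG])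
    fix i
    have "\<not> stopped sZ \<and> dest sZ = M \<and> (\<forall>t\<ge>T1. rpos v sZ t = M) \<and> next_look v (W Z) sZ \<ge> T1"
      using H[of Z] nlZ Wnn[of Z "Suc (ncyc (sel st Z))"] rpos_arrived[OF vpos, of sZ] cM
      unfolding sZ_def T1_def by auto
    moreover have "\<not> stopped sO \<and> dest sO = M \<and> (\<forall>t\<ge>T1. rpos v sO t = M) \<and> next_look v (W (\<not>Z)) sO \<ge> T1"
      using H[of "\<not>Z"] nlO Wnn[of "\<not>Z" "Suc (ncyc (sel st (\<not>Z)))"] rpos_arrived[OF vpos, of sO] cM2
      unfolding sO_def T1_def by auto
    ultimately show "\<not> stopped (sel ?st2 i) \<and> dest (sel ?st2 i) = M \<and> (\<forall>t\<ge>T1. rpos v (sel ?st2 i) t = M)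
             \<and> next_look v (W i) (sel ?st2 i) \<ge> T1"
      by (cases "i = Z") (auto simp: sel_upd)
  qed
  moreover have "(exec_step algA v W G r ^^ 2) st = ?st2"
    using st1 st2 by (simp add: numeral_2_eq_2)
  ultimately have "gl ((exec_step algA v W G r ^^ 2) ((exec_step algA v W G r ^^ 2) st))" by simp
  then show ?thesis by (intro exI[of _ "2 + 2"]) (simp only: funpow_add comp_apply)
qed

lemma init_fields[simp]: "lastlook (init_state p) = 0" "startp (init_state p) = p" "dest (init_state p) = p"
  "ncyc (init_state p) = 0" "stopped (init_state p) = False"
  by (simp_all add: init_state_def)

locale sc =
  fixes v :: real and W :: "bool \<Rightarrow> nat \<Rightarrow> real" and G :: "bool \<Rightarrow> nat \<Rightarrow> complex \<Rightarrow> complex"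
    and p1 p2 :: complex and X :: bool
  assumes vpos: "v > 0"
    and Wnn: "\<And>i k. W i k \<ge> 0"
    and simG: "\<And>i k. similarity (G i k)"
    and p12: "p1 \<noteq> p2"
    and Xdef: "X = (W True 0 \<le> W False 0)"
begin

definition "pX = (if X then p1 else p2)"
definition "pY = (if X then p2 else p1)"
definition "a = W X 0"
definition "b = W (\<not>X) 0"
definition "D = pY - pX"
definition "tau = cmod D / v"
definition "lam = (b - a) / tau"
definition "st0 = (init_state p1, init_state p2)"

lemma ab: "a \<le> b"
  using Xdef unfolding a_def b_def by (cases X) auto

lemma Dne: "D \<noteq> 0" using p12 unfolding D_def pX_def pY_def by auto
lemma taupos: "tau > 0" using Dne vpos unfolding tau_def by simp
lemma lam_nn: "lam \<ge> 0" using ab taupos unfolding lam_def by simp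
lemma b_eq: "b = a + lam * tau" using taupos unfolding lam_def by simp
lemma a_nn: "a \<ge> 0" using Wnn unfolding a_def by simp

lemma sel0X: "sel st0 X = init_state pX" unfolding st0_def sel_def pX_def by (cases X) auto
lemma sel0Y: "sel st0 (\<not>X) = init_state pY" unfolding st0_def sel_def pY_def by (cases X) auto

lemma cmod_lin: "cmod (pX + of_real x * D - (pX + of_real y * D)) = \<bar>x - y\<bar> * cmod D"
proof -
  have "pX + of_real x * D - (pX + of_real y * D) = of_real (x - y) * D" by (simp add: algebra_simps)
  then show ?thesis by (simp only: norm_mult norm_of_real)
qed

lemma lin_eq_iff: "pX + of_real x * D = pX + of_real y * D \<longleftrightarrow> x = y"
  using Dne by auto

definition s1 :: "rat \<Rightarrow> rstate" where
  "s1 c = (init_state pX)\<lparr>lastlook := a, startp := pX, dest := pX + cr c * D, ncyc := Suc 0\<rparr>"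

definition s2 :: "rat \<Rightarrow> rstate" where
  "s2 c = (init_state pY)\<lparr>lastlook := b, startp := pY, dest := pY + cr c * (pX + of_real lam * D - pY), ncyc := Suc 0\<rparr>"

lemma step1:
  assumes "decq (r X 0) = c"
  shows "exec_step algA v W G r st0 = upd st0 X (s1 c)"
proof -
  have nl: "next_look v (W X) (sel st0 X) = a" "next_look v (W (\<not>X)) (sel st0 (\<not>X)) = b"
    unfolding sel0X sel0Y by (simp_all add: next_look_def init_state_def a_def b_def)
  have ord: "stopped (sel st0 (\<not>X)) \<or> next_look v (W X) (sel st0 X) < next_look v (W (\<not>X)) (sel st0 (\<not>X))
         \<or> (X \<and> next_look v (W X) (sel st0 X) \<le> next_look v (W (\<not>X)) (sel st0 (\<not>X)))"
    unfolding nl a_def b_def using Xdef by (cases X) auto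
  have "exec_step algA v W G r st0 = upd st0 X (do_look algA v (W X) (G X) (r X) (sel st0 X)
            (rpos v (sel st0 (\<not>X)) (next_look v (W X) (sel st0 X))))"
    by (rule exec_step_pick) (use ord in \<open>auto simp: sel0X init_state_def\<close>)
  also have "\<dots> = upd st0 X (s1 c)"
    unfolding sel0X sel0Y using do_look_alg[of "G X" "init_state pX", OF simG] p12 assms
    by (auto simp: rpos_stat init_state_def s1_def cf_cr D_def pX_def pY_def next_look_def a_def)
  finally show ?thesis .
qed

lemma rpos_s1:
  assumes "lam < real_of_rat c"
  shows "rpos v (s1 c) b = pX + of_real lam * D"
proof -
  define cc where "cc = real_of_rat c"
  have ccpos: "cc > 0" using assms lam_nn unfolding cc_def by linarith
  have crc: "cr c = of_real cc" unfolding cr_def cc_def by simp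
  have cm: "cmod (cr c * D) = cc * cmod D" using ccpos by (simp add: crc norm_mult)
  have "(b - a) * v / cmod (cr c * D) = lam / cc"
    unfolding cm using b_eq vpos Dne ccpos unfolding tau_def by (simp add: field_simps)
  moreover have "lam / cc \<le> 1" using assms ccpos unfolding cc_def by simp
  ultimately have m: "min 1 ((b - a) * v / cmod (cr c * D)) = lam / cc" by simp
  have "rpos v (s1 c) b = pX + of_real (lam / cc) * (cr c * D)"
    unfolding rpos_def s1_def using m by (simp add: init_state_def)
  also have "\<dots> = pX + of_real lam * D" using ccpos by (simp add: crc)
  finally show ?thesis .
qed

lemma step2:
  assumes c: "decq (r X 0) = c" and c': "decq (r (\<not>X) 0) = c'"
    and lc: "lam < real_of_rat c" and l1: "lam < 1"
  shows "(exec_step algA v W G r ^^ 2) st0 = upd (upd st0 X (s1 c)) (\<not>X) (s2 c')"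
proof -
  let ?st1 = "upd st0 X (s1 c)"
  define cc where "cc = real_of_rat c"
  have ccpos: "cc > 0" using lc lam_nn unfolding cc_def by linarith
  have nl1: "next_look v (W X) (s1 c) = a + cc * tau + W X 1"
    unfolding next_look_def s1_def tau_def cc_def cr_def using ccpos unfolding cc_def
    by (simp add: norm_mult init_state_def)
  have nl2: "next_look v (W (\<not>X)) (init_state pY) = b"
    by (simp add: next_look_def init_state_def b_def)
  have "b < a + cc * tau" using b_eq lc taupos unfolding cc_def by (simp add: mult_strict_right_mono)
  then have ord: "next_look v (W (\<not>X)) (sel ?st1 (\<not>X)) < next_look v (W X) (sel ?st1 X)"
    using nl1 nl2 Wnn[of X 1] sel0Y by simp
  have "exec_step algA v W G r ?st1 = upd ?st1 (\<not>X) (do_look algA v (W (\<not>X)) (G (\<not>X)) (r (\<not>X)) (sel ?st1 (\<not>X))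
            (rpos v (sel ?st1 (\<not>\<not>X)) (next_look v (W (\<not>X)) (sel ?st1 (\<not>X)))))"
    by (rule exec_step_pick) (use ord in \<open>auto simp: sel0Y init_state_def\<close>)
  also have "\<dots> = upd ?st1 (\<not>X) (s2 c')"
  proof -
    have q: "rpos v (sel ?st1 (\<not>\<not>X)) (next_look v (W (\<not>X)) (sel ?st1 (\<not>X))) = pX + of_real lam * D"
      using rpos_s1[OF lc] nl2 sel0Y by simp
    have qne: "pX + of_real lam * D \<noteq> pY"
    proof
      assume "pX + of_real lam * D = pY"
      then have "pX + of_real lam * D = pX + of_real 1 * D" unfolding D_def by simp
      then have "lam = 1" by (simp only: lin_eq_iff)
      then show False using l1 by simp
    qed
    have dl: "do_look algA v (W (\<not>X)) (G (\<not>X)) (r (\<not>X)) (init_state pY) (pX + of_real lam * D) = s2 c'"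
      using do_look_alg[of "G (\<not>X)" "init_state pY", OF simG] qne c'
      by (simp add: s2_def cf_cr nl2)
    show ?thesis
      using q dl sel0Y by simp
  qed
  finally have "exec_step algA v W G r ?st1 = upd ?st1 (\<not>X) (s2 c')" .
  then show ?thesis using step1[of r c, OF c] by (simp add: numeral_2_eq_2)
qed

lemma D_pY: "pY = pX + D" unfolding D_def by simp

lemma lin_comb: "pX + of_real x * D + of_real th * ((pX + of_real y * D) - (pX + of_real x * D)) = pX + of_real (x + th * (y - x)) * D"
  by (simp add: algebra_simps)

lemma dest_s2: "pY + cr s * (pX + of_real lam * D - pY) = pX + of_real (1 - real_of_rat s * (1 - lam)) * D"
  unfolding D_pY cr_def by (simp add: algebra_simps)

lemma sumSuc: "(\<Sum>i\<in>{1..Suc k}. g i) = (\<Sum>i\<in>{1..k}. g i) + (g (Suc k) :: real)"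
  by simp

lemma caseA:
  assumes ba: "b \<ge> a + tau" and bit: "decq (r X 0) = 1"
  shows "\<exists>m. gl ((exec_step algA v W G r ^^ m) st0)"
proof -
  define f where "f k = b + (\<Sum>i\<in>{1..k}. W (\<not>X) i)" for k
  let ?st1 = "upd st0 X (s1 1)"
  have st1: "exec_step algA v W G r st0 = ?st1" using step1[of r 1, OF bit] .
  interpret F: fp v W G r "\<not>X" pY pX a tau 0 f 0 0 0
  proof
    show "v > 0" by (rule vpos)
    show "\<And>i k. 0 \<le> W i k" by (rule Wnn)
    show "\<And>i k. similarity (G i k)" by (rule simG)
    show "pY \<noteq> pX" using p12 unfolding pX_def pY_def by auto
    show "tau = cmod (pY - pX) / v" unfolding tau_def D_def ..
    show "0 \<le> a" by (rule a_nn)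
    show "\<And>k. f (Suc k) = f k + W (\<not> X) (Suc k)" unfolding f_def by simp
    show "a + tau \<le> f 0" unfolding f_def using ba by simp
    show "\<And>k. 0 \<le> k \<Longrightarrow> k < 0 \<Longrightarrow> decq (r (\<not> X) k) = 0" by simp
    show "decq (r (\<not> \<not> X) 0) = 1" using bit by simp
  qed
  have inv: "F.Inv ?st1"
  proof -
    have "F.Finv (init_state pY)"
      unfolding F.Finv_def by (simp add: next_look_def f_def b_def rpos_stat)
    moreover have "F.Linv (init_state pY) (s1 1)"
    proof -
      have "a + tau \<le> next_look v (W X) (s1 1)"
        using Wnn[of X 1] unfolding next_look_def s1_def tau_def by (simp add: cr_one)
      moreover have "a \<le> next_look v (W (\<not> X)) (init_state pY)"
        using ab by (simp add: next_look_def b_def)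
      ultimately show ?thesis unfolding F.Linv_def by (simp add: s1_def cr_one D_pY)
    qed
    ultimately show ?thesis unfolding F.Inv_def using sel0Y by simp
  qed
  obtain m where "gl ((exec_step algA v W G r ^^ m) ?st1)" using F.FP_main[OF inv] by blast
  then show ?thesis using st1 by (intro exI[of _ "Suc m"]) (simp only: funpow_Suc_right comp_apply)
qed

lemma lam_lt1: "b < a + tau \<Longrightarrow> lam < 1"
  using b_eq taupos by (simp add: mult_less_cancel_right2)

lemma cmod_D_tau: "cmod D / v = tau" unfolding tau_def ..

lemma nl_s1: "next_look v (W X) (s1 c) = a + \<bar>real_of_rat c\<bar> * tau + W X 1"
  unfolding next_look_def s1_def tau_def cr_def by (simp add: norm_mult)

lemma nl_s2: "next_look v (W (\<not>X)) (s2 c) = b + \<bar>real_of_rat c * (1 - lam)\<bar> * tau + W (\<not>X) 1"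
proof -
  have e1: "dest (s2 c) = pX + of_real (1 - real_of_rat c * (1 - lam)) * D"
    unfolding s2_def using dest_s2 by simp
  have e2: "startp (s2 c) = pX + of_real 1 * D" unfolding s2_def D_pY by simp
  have "cmod (dest (s2 c) - startp (s2 c)) = \<bar>real_of_rat c * (1 - lam)\<bar> * cmod D"
    unfolding e1 e2 cmod_lin by simp
  then show ?thesis unfolding next_look_def tau_def by (simp add: s2_def)
qed

lemma caseB:
  assumes ba: "b < a + tau" and Weq: "W X 1 = W (\<not>X) 1"
    and b0: "\<And>i. decq (r i 0) = 1" and b1: "\<And>i. decq (r i 1) = 1/2"
  shows "\<exists>m. gl ((exec_step algA v W G r ^^ m) st0)"
proof -
  have l1: "lam < 1" using lam_lt1[OF ba] .
  let ?st2 = "upd (upd st0 X (s1 1)) (\<not>X) (s2 1)"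
  have st2: "(exec_step algA v W G r ^^ 2) st0 = ?st2"
    using step2[of r 1 1] b0 l1 by simp
  define T where "T = a + tau + W X 1"
  have sX: "sel ?st2 X = s1 1" by (simp add: sel_upd)
  have sY: "sel ?st2 (\<not>X) = s2 1" by simp
  have HX: "\<not> stopped (s1 1) \<and> next_look v (W X) (s1 1) = T \<and>
         (\<forall>t\<ge>T. rpos v (s1 1) t = dest (s1 1)) \<and> decq (r X (ncyc (s1 1))) = 1/2"
  proof -
    have "\<forall>t\<ge>T. rpos v (s1 1) t = dest (s1 1)"
      using rpos_arrived[OF vpos, of "s1 1"] Wnn[of X 1]
      unfolding T_def s1_def by (simp add: cr_one cmod_D_tau)
    then show ?thesis using nl_s1[of 1] b1[of X] unfolding T_def by (simp add: s1_def)
  qed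
  have nlY: "next_look v (W (\<not>X)) (s2 1) = T"
    using nl_s2[of 1] l1 b_eq Weq unfolding T_def by (simp add: algebra_simps)
  have HY: "\<not> stopped (s2 1) \<and> next_look v (W (\<not>X)) (s2 1) = T \<and>
         (\<forall>t\<ge>T. rpos v (s2 1) t = dest (s2 1)) \<and> decq (r (\<not>X) (ncyc (s2 1))) = 1/2"
  proof -
    have "\<forall>t\<ge>T. rpos v (s2 1) t = dest (s2 1)"
    proof (intro allI impI)
      fix t assume "t \<ge> T"
      then have "t \<ge> lastlook (s2 1) + cmod (dest (s2 1) - startp (s2 1)) / v"
        using nlY Wnn[of "\<not>X" 1] unfolding next_look_def by (simp add: s2_def)
      then show "rpos v (s2 1) t = dest (s2 1)" using rpos_arrived[OF vpos] by blast
    qed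
    then show ?thesis using nlY b1[of "\<not>X"] by (simp add: s2_def)
  qed
  have dne: "dest (s1 1) \<noteq> dest (s2 1)"
  proof
    assume "dest (s1 1) = dest (s2 1)"
    then have "pX + of_real 1 * D = pX + of_real (1 - real_of_rat 1 * (1 - lam)) * D"
      unfolding s1_def s2_def dest_s2[symmetric] by (simp add: cr_one)
    then have "1 = 1 - real_of_rat 1 * (1 - lam)" by (simp only: lin_eq_iff)
    then show False using l1 by simp
  qed
  have "\<exists>m. gl ((exec_step algA v W G r ^^ m) ?st2)"
  proof (rule mid_finish[OF vpos Wnn simG])
    fix i
    show "\<not> stopped (sel ?st2 i) \<and> next_look v (W i) (sel ?st2 i) = T \<and>
         (\<forall>t\<ge>T. rpos v (sel ?st2 i) t = dest (sel ?st2 i)) \<and> decq (r i (ncyc (sel ?st2 i))) = 1/2"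
      using HX HY sX sY by (cases "i = X") (auto simp: sel_upd)
    show "dest (sel ?st2 True) \<noteq> dest (sel ?st2 False)"
      using dne sX sY by (cases X) (auto simp: sel_upd)
  qed
  then obtain m where "gl ((exec_step algA v W G r ^^ m) ?st2)" by blast
  then show ?thesis using st2 by (intro exI[of _ "m + 2"]) (simp only: funpow_add comp_apply)
qed

lemma startp_s2: "startp (s2 c) = pX + of_real 1 * D" unfolding s2_def D_pY by simp
lemma dest_s2': "dest (s2 c) = pX + of_real (1 - real_of_rat c * (1 - lam)) * D"
  unfolding s2_def using dest_s2 by simp
lemma startp_s1: "startp (s1 c) = pX + of_real 0 * D" unfolding s1_def by simp
lemma dest_s1: "dest (s1 c) = pX + of_real (real_of_rat c) * D" unfolding s1_def cr_def by simp

lemma rpos_s1_any: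
  assumes "t \<ge> a" shows "\<exists>th. 0 \<le> th \<and> th \<le> 1 \<and> rpos v (s1 c) t = pX + of_real (th * real_of_rat c) * D"
proof -
  obtain th where th: "0 \<le> th" "th \<le> 1" "rpos v (s1 c) t = startp (s1 c) + of_real th * (dest (s1 c) - startp (s1 c))"
    using rpos_seg[OF vpos, of "s1 c" t] assms by (auto simp: s1_def)
  then have "rpos v (s1 c) t = pX + of_real (0 + th * (real_of_rat c - 0)) * D"
    unfolding startp_s1 dest_s1 lin_comb by simp
  then show ?thesis using th by auto
qed

lemma rpos_s2_any:
  assumes "t \<ge> b" shows "\<exists>th. 0 \<le> th \<and> th \<le> 1 \<and> rpos v (s2 c) t = pX + of_real (1 - th * (real_of_rat c * (1 - lam))) * D"
proof -
  obtain th where th: "0 \<le> th" "th \<le> 1" "rpos v (s2 c) t = startp (s2 c) + of_real th * (dest (s2 c) - startp (s2 c))"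
    using rpos_seg[OF vpos, of "s2 c" t] assms by (auto simp: s2_def)
  then have eq: "rpos v (s2 c) t = pX + of_real (1 + th * ((1 - real_of_rat c * (1 - lam)) - 1)) * D"
    unfolding startp_s2 dest_s2' lin_comb by simp
  have r: "1 + th * ((1 - real_of_rat c * (1 - lam)) - 1) = 1 - th * (real_of_rat c * (1 - lam))"
    by (simp add: algebra_simps)
  show ?thesis using th eq[unfolded r] by blast
qed

lemma arrived_s1: "t \<ge> a + \<bar>real_of_rat c\<bar> * tau \<Longrightarrow> rpos v (s1 c) t = dest (s1 c)"
  using rpos_arrived[OF vpos, of "s1 c" t] unfolding s1_def tau_def cr_def by (simp add: norm_mult)

lemma arrived_s2: "t \<ge> b + \<bar>real_of_rat c * (1 - lam)\<bar> * tau \<Longrightarrow> rpos v (s2 c) t = dest (s2 c)"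
proof -
  assume "t \<ge> b + \<bar>real_of_rat c * (1 - lam)\<bar> * tau"
  moreover have "next_look v (W (\<not>X)) (s2 c) = lastlook (s2 c) + cmod (dest (s2 c) - startp (s2 c)) / v + W (\<not>X) 1"
    by (simp add: next_look_def s2_def)
  ultimately show ?thesis using nl_s2[of c] rpos_arrived[OF vpos, of "s2 c" t] by (simp add: s2_def)
qed

lemma caseCX:
  assumes ba: "b < a + tau" and n1: "1 \<le> n" and P: "(\<Sum>i\<in>{1..n}. W X i) > W (\<not>X) 1"
  shows "\<exists>t s. \<forall>r. decq (r X 0) = t \<longrightarrow> decq (r (\<not>X) 0) = s \<longrightarrow> decq (r (\<not>X) 1) = 1 \<longrightarrow>
     (\<forall>k. 1 \<le> k \<longrightarrow> k < n \<longrightarrow> decq (r X k) = 0) \<longrightarrow> (\<exists>m. gl ((exec_step algA v W G r ^^ m) st0))"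
proof -
  define \<delta> where "\<delta> = (\<Sum>i\<in>{1..n}. W X i) - W (\<not>X) 1"
  have dpos: "\<delta> > 0" using P unfolding \<delta>_def by simp
  have l1: "lam < 1" using lam_lt1[OF ba] .
  have "\<delta>/(2*tau) > 0" using dpos taupos by simp
  then have B: "(1+lam)/2 - \<delta>/(2*tau) < (1+lam)/2" by linarith
  have A: "lam < (1+lam)/2" using l1 by simp
  have "max lam ((1+lam)/2 - \<delta>/(2*tau)) < (1+lam)/2"
    unfolding max_less_iff_conj using A B by blast
  then obtain tr where trQ: "tr \<in> \<rat>" and tr1: "max lam ((1+lam)/2 - \<delta>/(2*tau)) < tr" and tr2: "tr < (1+lam)/2"
    using Rats_dense_in_real by blast
  obtain t where tt: "tr = real_of_rat t" using trQ by (auto elim: Rats_cases)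
  have "(tr - lam)/(1-lam) < (1-tr)/(1-lam)"
    using tr2 l1 by (simp add: divide_strict_right_mono)
  then obtain sr where srQ: "sr \<in> \<rat>" and sr1: "(tr - lam)/(1-lam) < sr" and sr2: "sr < (1-tr)/(1-lam)"
    using Rats_dense_in_real by blast
  obtain s where ss: "sr = real_of_rat s" using srQ by (auto elim: Rats_cases)
  define \<sigma> where "\<sigma> = sr * (1 - lam)"
  have l1': "1 - lam > 0" using l1 by simp
  have sg1: "tr - lam < \<sigma>" using sr1 l1' unfolding \<sigma>_def by (simp add: pos_divide_less_eq)
  have sg2: "\<sigma> < 1 - tr" using sr2 l1' unfolding \<sigma>_def by (simp add: pos_less_divide_eq)
  have trl: "lam < tr" using tr1 by simp
  have sgpos: "\<sigma> > 0" using sg1 trl by simp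
  have trpos: "tr > 0" using trl lam_nn by simp
  have key: "(1 + lam - 2*tr) * tau < \<delta>"
  proof -
    define z where "z = \<delta>/tau"
    have "(1+lam)/2 - z/2 < tr" using tr1 unfolding z_def by simp
    then have "1 + lam - 2*tr < z" by (auto simp: field_simps)
    then have "1 + lam - 2*tr < \<delta>/tau" unfolding z_def .
    then show ?thesis using taupos by (simp add: pos_less_divide_eq)
  qed
  show ?thesis
  proof (rule exI[of _ t], rule exI[of _ s], intro allI impI)
    fix r assume b0: "decq (r X 0) = t" and b0': "decq (r (\<not>X) 0) = s"
      and bL: "decq (r (\<not>X) 1) = 1" and bF: "\<forall>k. 1 \<le> k \<longrightarrow> k < n \<longrightarrow> decq (r X k) = 0"
    let ?st2 = "upd (upd st0 X (s1 t)) (\<not>X) (s2 s)"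
    have st2: "(exec_step algA v W G r ^^ 2) st0 = ?st2"
      using step2[of r t s, OF b0 b0'] trl l1 tt by simp
    define PF where "PF = pX + of_real tr * D"
    define PL where "PL = pX + of_real (1 - \<sigma>) * D"
    define \<gamma> where "\<gamma> = b + \<sigma> * tau + W (\<not>X) 1"
    define e where "e = (1 - \<sigma> - tr) * tau"
    define AF where "AF = a + tr * tau"
    define f where "f k = a + tr * tau + (\<Sum>i\<in>{1..k}. W X i)" for k
    have dPF: "dest (s1 t) = PF" unfolding PF_def dest_s1 tt ..
    have dPL: "dest (s2 s) = PL" unfolding PL_def dest_s2' \<sigma>_def ss ..
    interpret F: fp v W G r X PF PL \<gamma> e AF f n 1 1
    proof
      show "v > 0" by (rule vpos)
      show "\<And>i k. 0 \<le> W i k" by (rule Wnn)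
      show "\<And>i k. similarity (G i k)" by (rule simG)
      show "PF \<noteq> PL" unfolding PF_def PL_def lin_eq_iff using sg2 by simp
      show "e = cmod (PF - PL) / v" unfolding PF_def PL_def cmod_lin e_def tau_def using sg2 by simp
      have "tr * tau \<le> (lam + \<sigma>) * tau" using sg1 taupos by (intro mult_right_mono) auto
      then have h: "tr * tau \<le> lam * tau + \<sigma> * tau" by (simp add: distrib_right)
      show "AF \<le> \<gamma>" unfolding AF_def \<gamma>_def using h b_eq Wnn[of "\<not>X" 1] by linarith
      show "\<And>k. f (Suc k) = f k + W X (Suc k)" unfolding f_def by simp
      show "\<gamma> + e \<le> f n" unfolding f_def \<gamma>_def e_def using key b_eq unfolding \<delta>_def by (simp add: algebra_simps)
      show "\<And>k. 1 \<le> k \<Longrightarrow> k < n \<Longrightarrow> decq (r X k) = 0" using bF by blast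
      show "decq (r (\<not> X) 1) = 1" by (rule bL)
    qed
    have inv: "F.Inv ?st2"
    proof -
      have nl1: "next_look v (W X) (s1 t) = f 1" using nl_s1[of t] trpos tt unfolding f_def by simp
      have "F.Finv (s1 t)"
        unfolding F.Finv_def using n1 nl1 arrived_s1[of t] dPF trpos tt
        by (auto simp: s1_def AF_def)
      moreover have "F.Linv (s1 t) (s2 s)"
      proof -
        have nl2: "next_look v (W (\<not>X)) (s2 s) = \<gamma>"
          using nl_s2[of s] sgpos ss unfolding \<gamma>_def \<sigma>_def by simp
        have nr: "\<forall>t'\<ge>lastlook (s2 s). rpos v (s2 s) t' \<noteq> PF"
        proof (intro allI impI)
          fix t' assume "lastlook (s2 s) \<le> t'"
          then have "t' \<ge> b" by (simp add: s2_def)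
          then obtain th where th: "0 \<le> th" "th \<le> 1"
            "rpos v (s2 s) t' = pX + of_real (1 - th * \<sigma>) * D"
            using rpos_s2_any[of t' s] ss unfolding \<sigma>_def by auto
          have "th * \<sigma> \<le> \<sigma>" using th sgpos by (simp add: mult_left_le_one_le)
          then have "1 - th * \<sigma> \<noteq> tr" using sg2 by simp
          then show "rpos v (s2 s) t' \<noteq> PF" unfolding th(3) PF_def lin_eq_iff .
        qed
        have "lam * tau \<le> tr * tau" using trl taupos by (intro mult_right_mono) auto
        moreover have "f 1 = a + tr * tau + W X 1" unfolding f_def by simp
        ultimately have "b \<le> next_look v (W X) (s1 t)"
          using nl1 b_eq Wnn[of X 1] by linarith
        then show ?thesis unfolding F.Linv_def using nl2 nr dPL
          by (simp add: s2_def)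
      qed
      ultimately show ?thesis unfolding F.Inv_def by (simp add: sel_upd)
    qed
    obtain m where "gl ((exec_step algA v W G r ^^ m) ?st2)" using F.FP_main[OF inv] by blast
    then show "\<exists>m. gl ((exec_step algA v W G r ^^ m) st0)"
      using st2 by (intro exI[of _ "m + 2"]) (simp only: funpow_add comp_apply)
  qed
qed

lemma caseCY:
  assumes ba: "b < a + tau" and n1: "1 \<le> n" and P: "(\<Sum>i\<in>{1..n}. W (\<not>X) i) > W X 1"
  shows "\<exists>t s. \<forall>r. decq (r X 0) = t \<longrightarrow> decq (r (\<not>X) 0) = s \<longrightarrow> decq (r X 1) = 1 \<longrightarrow>
     (\<forall>k. 1 \<le> k \<longrightarrow> k < n \<longrightarrow> decq (r (\<not>X) k) = 0) \<longrightarrow> (\<exists>m. gl ((exec_step algA v W G r ^^ m) st0))"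
proof -
  define \<delta> where "\<delta> = (\<Sum>i\<in>{1..n}. W (\<not>X) i) - W X 1"
  have dpos: "\<delta> > 0" using P unfolding \<delta>_def by simp
  have l1: "lam < 1" using lam_lt1[OF ba] .
  have l1': "1 - lam > 0" using l1 by simp
  define z where "z = \<delta> / (tau * (1 - lam))"
  have zpos: "z > 0" unfolding z_def using dpos taupos l1' by simp
  have "1/2 - z/2 < (1/2::real)" using zpos by simp
  then have "max 0 (1/2 - z/2) < (1/2::real)"
    unfolding max_less_iff_conj by simp
  then obtain sr where srQ: "sr \<in> \<rat>" and sr1: "max 0 (1/2 - z/2) < sr" and sr2: "sr < 1/2"
    using Rats_dense_in_real by blast
  obtain s where ss: "sr = real_of_rat s" using srQ by (auto elim: Rats_cases)
  define \<sigma> where "\<sigma> = sr * (1 - lam)"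
  have srpos: "sr > 0" using sr1 by simp
  have sgpos: "\<sigma> > 0" unfolding \<sigma>_def using srpos l1' by simp
  have sg2: "2 * \<sigma> < 1 - lam" unfolding \<sigma>_def using sr2 l1' by simp
  have key: "(1 - lam - 2 * \<sigma>) * tau < \<delta>"
  proof -
    have "1/2 - z/2 < sr" using sr1 by simp
    then have "1 - 2 * sr < z" by (auto simp: field_simps)
    then have "(1 - 2 * sr) * (tau * (1 - lam)) < \<delta>"
      unfolding z_def using taupos l1' by (simp add: pos_less_divide_eq)
    moreover have "(1 - lam - 2 * \<sigma>) * tau = (1 - 2 * sr) * (tau * (1 - lam))"
      unfolding \<sigma>_def by (simp add: algebra_simps)
    ultimately show ?thesis by (simp only:)
  qed
  have "lam + \<sigma> < 1 - \<sigma>" using sg2 by simp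
  then obtain tr where trQ: "tr \<in> \<rat>" and tr1: "lam + \<sigma> < tr" and tr2: "tr < 1 - \<sigma>"
    using Rats_dense_in_real by blast
  obtain t where tt: "tr = real_of_rat t" using trQ by (auto elim: Rats_cases)
  have trl: "lam < tr" using tr1 sgpos by simp
  have trpos: "tr > 0" using trl lam_nn by simp
  show ?thesis
  proof (rule exI[of _ t], rule exI[of _ s], intro allI impI)
    fix r assume b0: "decq (r X 0) = t" and b0': "decq (r (\<not>X) 0) = s"
      and bL: "decq (r X 1) = 1" and bF: "\<forall>k. 1 \<le> k \<longrightarrow> k < n \<longrightarrow> decq (r (\<not>X) k) = 0"
    let ?st2 = "upd (upd st0 X (s1 t)) (\<not>X) (s2 s)"
    have st2: "(exec_step algA v W G r ^^ 2) st0 = ?st2"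
      using step2[of r t s, OF b0 b0'] trl l1 tt by simp
    define PF where "PF = pX + of_real (1 - \<sigma>) * D"
    define PL where "PL = pX + of_real tr * D"
    define \<gamma> where "\<gamma> = a + tr * tau + W X 1"
    define e where "e = (1 - \<sigma> - tr) * tau"
    define AF where "AF = b + \<sigma> * tau"
    define f where "f k = b + \<sigma> * tau + (\<Sum>i\<in>{1..k}. W (\<not>X) i)" for k
    have dPL: "dest (s1 t) = PL" unfolding PL_def dest_s1 tt ..
    have dPF: "dest (s2 s) = PF" unfolding PF_def dest_s2' \<sigma>_def ss ..
    interpret F: fp v W G r "\<not>X" PF PL \<gamma> e AF f n 1 1
    proof
      show "v > 0" by (rule vpos)
      show "\<And>i k. 0 \<le> W i k" by (rule Wnn)
      show "\<And>i k. similarity (G i k)" by (rule simG)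
      show "PF \<noteq> PL" unfolding PF_def PL_def lin_eq_iff using tr2 by simp
      show "e = cmod (PF - PL) / v" unfolding PF_def PL_def cmod_lin e_def tau_def using tr2 by simp
      have "(lam + \<sigma>) * tau \<le> tr * tau" using tr1 taupos by (intro mult_right_mono) auto
      then have h: "lam * tau + \<sigma> * tau \<le> tr * tau" by (simp add: distrib_right)
      show "AF \<le> \<gamma>" unfolding AF_def \<gamma>_def using h b_eq Wnn[of X 1] by linarith
      show "\<And>k. f (Suc k) = f k + W (\<not>X) (Suc k)" unfolding f_def by simp
      show "\<gamma> + e \<le> f n" unfolding f_def \<gamma>_def e_def using key b_eq unfolding \<delta>_def by (simp add: algebra_simps)
      show "\<And>k. 1 \<le> k \<Longrightarrow> k < n \<Longrightarrow> decq (r (\<not>X) k) = 0" using bF by blast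
      show "decq (r (\<not> \<not> X) 1) = 1" using bL by simp
    qed
    have inv: "F.Inv ?st2"
    proof -
      have nl2: "next_look v (W (\<not>X)) (s2 s) = f 1"
        using nl_s2[of s] sgpos ss unfolding f_def \<sigma>_def by simp
      have "F.Finv (s2 s)"
        unfolding F.Finv_def using n1 nl2 arrived_s2[where c = s] dPF sgpos ss
        by (auto simp: s2_def AF_def \<sigma>_def)
      moreover have "F.Linv (s2 s) (s1 t)"
      proof -
        have nl1: "next_look v (W X) (s1 t) = \<gamma>"
          using nl_s1[of t] trpos tt unfolding \<gamma>_def by simp
        have nr: "\<forall>t'\<ge>lastlook (s1 t). rpos v (s1 t) t' \<noteq> PF"
        proof (intro allI impI)
          fix t' assume "lastlook (s1 t) \<le> t'"
          then have "t' \<ge> a" by (simp add: s1_def)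
          then obtain th where th: "0 \<le> th" "th \<le> 1"
            "rpos v (s1 t) t' = pX + of_real (th * tr) * D"
            using rpos_s1_any[of t' t] tt by auto
          have "th * tr \<le> tr" using th trpos by (simp add: mult_left_le_one_le)
          then have "th * tr \<noteq> 1 - \<sigma>" using tr2 by simp
          then show "rpos v (s1 t) t' \<noteq> PF" unfolding th(3) PF_def lin_eq_iff .
        qed
        have "f 1 = b + \<sigma> * tau + W (\<not>X) 1" unfolding f_def by simp
        then have "a \<le> next_look v (W (\<not>X)) (s2 s)"
          using nl2 ab sgpos taupos Wnn[of "\<not>X" 1] by (simp add: add_increasing2)
        then show ?thesis unfolding F.Linv_def using nl1 nr dPL
          by (simp add: s1_def)
      qed
      ultimately show ?thesis unfolding F.Inv_def by (simp add: sel_upd)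
    qed
    obtain m where "gl ((exec_step algA v W G r ^^ m) ?st2)" using F.FP_main[OF inv] by blast
    then show "\<exists>m. gl ((exec_step algA v W G r ^^ m) st0)"
      using st2 by (intro exI[of _ "m + 2"]) (simp only: funpow_add comp_apply)
  qed
qed

end

lemma core:
  assumes vpos: "v > 0" and Wnn: "\<And>i k. W i k \<ge> 0" and simG: "\<And>i k. similarity (G i k)"
  shows "\<exists>plan N. \<forall>r. (\<forall>i k. k \<le> N \<longrightarrow> decq (r i k) = plan i k) \<longrightarrow>
           (\<exists>m. gl ((exec_step algA v W G r ^^ m) (init_state p1, init_state p2)))"
proof (cases "p1 = p2")
  case True
  have H: "\<not> stopped (sel (init_state p1, init_state p2) i) \<and> dest (sel (init_state p1, init_state p2) i) = p1 \<and>
        (\<forall>t\<ge>0. rpos v (sel (init_state p1, init_state p2) i) t = p1) \<and>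
        0 \<le> next_look v (W i) (sel (init_state p1, init_state p2) i)" for i
    using True Wnn[of i 0] by (cases i) (auto simp: sel_def rpos_stat next_look_def)
  have "gl ((exec_step algA v W G r ^^ 2) (init_state p1, init_state p2))" for r
    by (rule Fin2[OF vpos simG H])
  then show ?thesis by blast
next
  case False
  interpret S: sc v W G p1 p2 "W True 0 \<le> W False 0"
    by unfold_locales (use vpos Wnn simG False in auto)
  define X where "X = (W True 0 \<le> W False 0)"
  have st0: "S.st0 = (init_state p1, init_state p2)" unfolding S.st0_def ..
  show ?thesis
  proof (cases "S.b \<ge> S.a + S.tau")
    case True
    show ?thesis
    proof (rule exI[of _ "\<lambda>i k. 1"], rule exI[of _ 0], intro allI impI)
      fix r :: "bool \<Rightarrow> nat \<Rightarrow> bits"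
      assume "\<forall>i k. k \<le> 0 \<longrightarrow> decq (r i k) = 1"
      then have "decq (r (W True 0 \<le> W False 0) 0) = 1" by simp
      then show "\<exists>m. gl ((exec_step algA v W G r ^^ m) (init_state p1, init_state p2))"
        using S.caseA[OF True] st0 by simp
    qed
  next
    case ba: False
    then have ba: "S.b < S.a + S.tau" by simp
    show ?thesis
    proof (cases "\<exists>n\<ge>1. (\<Sum>i\<in>{1..n}. W X i) > W (\<not>X) 1")
      case True
      then obtain n where n1: "1 \<le> n" and P: "(\<Sum>i\<in>{1..n}. W X i) > W (\<not>X) 1" by blast
      obtain t s where ts: "\<forall>r. decq (r X 0) = t \<longrightarrow> decq (r (\<not>X) 0) = s \<longrightarrow> decq (r (\<not>X) 1) = 1 \<longrightarrow>
         (\<forall>k. 1 \<le> k \<longrightarrow> k < n \<longrightarrow> decq (r X k) = 0) \<longrightarrow> (\<exists>m. gl ((exec_step algA v W G r ^^ m) S.st0))"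
        using S.caseCX[OF ba n1] P unfolding X_def by blast
      show ?thesis
      proof (rule exI[of _ "\<lambda>i k. if k = 0 then (if i = X then t else s) else if i = (\<not>X) \<and> k = 1 then 1 else 0"],
             rule exI[of _ n], intro allI impI)
        fix r :: "bool \<Rightarrow> nat \<Rightarrow> bits"
        assume H: "\<forall>i k. k \<le> n \<longrightarrow> decq (r i k) = (if k = 0 then (if i = X then t else s) else if i = (\<not>X) \<and> k = 1 then 1 else 0)"
        have "decq (r X 0) = t" "decq (r (\<not>X) 0) = s" "decq (r (\<not>X) 1) = 1"
          "\<forall>k. 1 \<le> k \<longrightarrow> k < n \<longrightarrow> decq (r X k) = 0"
          using H n1 by auto
        then show "\<exists>m. gl ((exec_step algA v W G r ^^ m) (init_state p1, init_state p2))"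
          using ts st0 by auto
      qed
    next
      case nX: False
      show ?thesis
      proof (cases "\<exists>n\<ge>1. (\<Sum>i\<in>{1..n}. W (\<not>X) i) > W X 1")
        case True
        then obtain n where n1: "1 \<le> n" and P: "(\<Sum>i\<in>{1..n}. W (\<not>X) i) > W X 1" by blast
        obtain t s where ts: "\<forall>r. decq (r X 0) = t \<longrightarrow> decq (r (\<not>X) 0) = s \<longrightarrow> decq (r X 1) = 1 \<longrightarrow>
           (\<forall>k. 1 \<le> k \<longrightarrow> k < n \<longrightarrow> decq (r (\<not>X) k) = 0) \<longrightarrow> (\<exists>m. gl ((exec_step algA v W G r ^^ m) S.st0))"
          using S.caseCY[OF ba n1] P unfolding X_def by blast
        show ?thesis
        proof (rule exI[of _ "\<lambda>i k. if k = 0 then (if i = X then t else s) else if i = X \<and> k = 1 then 1 else 0"],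
               rule exI[of _ n], intro allI impI)
          fix r :: "bool \<Rightarrow> nat \<Rightarrow> bits"
          assume H: "\<forall>i k. k \<le> n \<longrightarrow> decq (r i k) = (if k = 0 then (if i = X then t else s) else if i = X \<and> k = 1 then 1 else 0)"
          have "decq (r X 0) = t" "decq (r (\<not>X) 0) = s" "decq (r X 1) = 1"
            "\<forall>k. 1 \<le> k \<longrightarrow> k < n \<longrightarrow> decq (r (\<not>X) k) = 0"
            using H n1 by auto
          then show "\<exists>m. gl ((exec_step algA v W G r ^^ m) (init_state p1, init_state p2))"
            using ts st0 by auto
        qed
      next
        case nY: False
        have "\<not> (W X 1 > W (\<not>X) 1)"
        proof
          assume "W X 1 > W (\<not>X) 1"
          then have "\<exists>n\<ge>1. (\<Sum>i\<in>{1..n}. W X i) > W (\<not>X) 1" by (intro exI[of _ 1]) simp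
          with nX show False by blast
        qed
        moreover have "\<not> (W (\<not>X) 1 > W X 1)"
        proof
          assume "W (\<not>X) 1 > W X 1"
          then have "\<exists>n\<ge>1. (\<Sum>i\<in>{1..n}. W (\<not>X) i) > W X 1" by (intro exI[of _ 1]) simp
          with nY show False by blast
        qed
        ultimately have Weq: "W X 1 = W (\<not>X) 1" by simp
        show ?thesis
        proof (rule exI[of _ "\<lambda>i k. if k = 0 then 1 else 1/2"], rule exI[of _ 1], intro allI impI)
          fix r :: "bool \<Rightarrow> nat \<Rightarrow> bits"
          assume H: "\<forall>i k. k \<le> 1 \<longrightarrow> decq (r i k) = (if k = 0 then 1 else 1/2)"
          have b0: "\<And>i. decq (r i 0) = 1" and b1: "\<And>i. decq (r i 1) = 1/2" using H by auto
          show "\<exists>m. gl ((exec_step algA v W G r ^^ m) (init_state p1, init_state p2))"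
            using S.caseB[OF ba _ b0 b1] Weq st0 unfolding X_def by simp
        qed
      qed
    qed
  qed
qed

lemma pps_coin: "product_prob_space (\<lambda>_::bool \<times> nat \<times> nat. measure_pmf (bernoulli_pmf (1/2)))"
  by (intro product_prob_space.intro product_sigma_finite.intro product_prob_space_axioms.intro)
     (auto intro: prob_space_imp_sigma_finite prob_space_measure_pmf)

lemma cyl_eq: "{\<omega> \<in> space coin_space. \<forall>x\<in>J. \<omega> x = val x} = prod_emb UNIV (\<lambda>_::bool \<times> nat \<times> nat. measure_pmf (bernoulli_pmf (1/2))) J (\<Pi>\<^sub>E x\<in>J. {val x})"
  unfolding coin_space_def prod_emb_def space_PiM
  by (simp only: set_eq_iff mem_Collect_eq vimage_eq Int_iff restrict_PiE_iff singleton_iff) blast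

lemma cyl_pos:
  fixes J :: "(bool \<times> nat \<times> nat) set" and val :: "bool \<times> nat \<times> nat \<Rightarrow> bool"
  assumes fin: "finite J"
  shows "{\<omega> \<in> space coin_space. \<forall>x\<in>J. \<omega> x = val x} \<in> sets coin_space"
    "measure coin_space {\<omega> \<in> space coin_space. \<forall>x\<in>J. \<omega> x = val x} > 0"
proof -
  let ?M = "\<lambda>_::bool \<times> nat \<times> nat. measure_pmf (bernoulli_pmf (1/2))"
  interpret P: product_prob_space ?M UNIV by (rule pps_coin)
  show "{\<omega> \<in> space coin_space. \<forall>x\<in>J. \<omega> x = val x} \<in> sets coin_space"
    unfolding cyl_eq unfolding coin_space_def by (rule sets_PiM_I) (use fin in auto)
  have "measure coin_space {\<omega> \<in> space coin_space. \<forall>x\<in>J. \<omega> x = val x} = (\<Prod>x\<in>J. measure (?M x) {val x})"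
    unfolding cyl_eq unfolding coin_space_def by (rule P.measure_PiM_emb) (use fin in auto)
  also have "\<dots> = (\<Prod>x\<in>J. 1/2)"
    by (intro prod.cong refl) (auto simp: measure_pmf_single pmf_bernoulli_True pmf_bernoulli_False split: bool.splits)
  finally show "measure coin_space {\<omega> \<in> space coin_space. \<forall>x\<in>J. \<omega> x = val x} > 0" by simp
qed

theorem theorem1:
  "\<exists>A :: algo. \<forall>(v::real) (W :: bool \<Rightarrow> nat \<Rightarrow> real)
      (F :: bool \<Rightarrow> nat \<Rightarrow> complex \<Rightarrow> complex) (p1::complex) (p2::complex).
     v > 0 \<longrightarrow> (\<forall>i k. W i k \<ge> 0) \<longrightarrow> (\<forall>i k. similarity (F i k)) \<longrightarrow>
     (\<exists>E \<in> sets coin_space.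
        E \<subseteq> {\<omega> \<in> space coin_space. gathered A v W F (bits_of \<omega>) p1 p2} \<and>
        measure coin_space E > 0)"
proof (rule exI[of _ algA], intro allI impI)
  fix v :: real and W :: "bool \<Rightarrow> nat \<Rightarrow> real" and F :: "bool \<Rightarrow> nat \<Rightarrow> complex \<Rightarrow> complex"
    and p1 p2 :: complex
  assume vpos: "v > 0" and Wnn: "\<forall>i k. W i k \<ge> 0" and simF: "\<forall>i k. similarity (F i k)"
  obtain plan N where PN: "\<forall>r. (\<forall>i k. k \<le> N \<longrightarrow> decq (r i k) = plan i k) \<longrightarrow>
           (\<exists>m. gl ((exec_step algA v W F r ^^ m) (init_state p1, init_state p2)))"
    using core[of v W F p1 p2] vpos Wnn simF by blast
  define code where "code i k = to_nat (plan i k)" for i k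
  define J where "J = (SIGMA i:(UNIV::bool set). SIGMA k:{..N}. {..code i k})"
  define val where "val x = (case x of (i, k, j) \<Rightarrow> j < code i k)" for x :: "bool \<times> nat \<times> nat"
  define E where "E = {\<omega> \<in> space coin_space. \<forall>x\<in>J. \<omega> x = val x}"
  have finJ: "finite J" unfolding J_def by (intro finite_SigmaI) auto
  show "\<exists>E \<in> sets coin_space.
        E \<subseteq> {\<omega> \<in> space coin_space. gathered algA v W F (bits_of \<omega>) p1 p2} \<and>
        measure coin_space E > 0"
  proof (intro bexI[of _ E] conjI)
    show "E \<in> sets coin_space" unfolding E_def by (rule cyl_pos(1)[OF finJ])
    show "measure coin_space E > 0" unfolding E_def by (rule cyl_pos(2)[OF finJ])
    show "E \<subseteq> {\<omega> \<in> space coin_space. gathered algA v W F (bits_of \<omega>) p1 p2}"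
    proof
      fix \<omega> assume om: "\<omega> \<in> E"
      have dec: "decq (bits_of \<omega> i k) = plan i k" if "k \<le> N" for i k
      proof -
        have all: "\<forall>x\<in>J. \<omega> x = val x" using om unfolding E_def by simp
        have vals: "\<omega> (i, k, j) = (j < code i k)" if "j \<le> code i k" for j
        proof -
          have "(i, k, j) \<in> J" unfolding J_def using that \<open>k \<le> N\<close> by simp
          then have "\<omega> (i, k, j) = val (i, k, j)" using all by blast
          then show ?thesis unfolding val_def by simp
        qed
        have "(LEAST n. \<not> bits_of \<omega> i k n) = code i k"
        proof (rule Least_equality)
          show "\<not> bits_of \<omega> i k (code i k)" using vals[of "code i k"] by (simp add: bits_of_def)
          show "code i k \<le> y" if "\<not> bits_of \<omega> i k y" for y
          proof (rule ccontr)
            assume "\<not> code i k \<le> y"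
            then have "y < code i k" by simp
            then have "\<omega> (i, k, y)" using vals[of y] by simp
            then show False using that by (simp add: bits_of_def)
          qed
        qed
        then show ?thesis unfolding decq_def code_def by simp
      qed
      have "(\<forall>i k. k \<le> N \<longrightarrow> decq (bits_of \<omega> i k) = plan i k) \<longrightarrow>
           (\<exists>m. gl ((exec_step algA v W F (bits_of \<omega>) ^^ m) (init_state p1, init_state p2)))"
        using PN by (rule spec)
      moreover have "\<forall>i k. k \<le> N \<longrightarrow> decq (bits_of \<omega> i k) = plan i k" using dec by blast
      ultimately obtain m where gm: "gl ((exec_step algA v W F (bits_of \<omega>) ^^ m) (init_state p1, init_state p2))"
        by blast
      have "gathered algA v W F (bits_of \<omega>) p1 p2"
        unfolding gathered_def
      proof (rule exI[of _ m])
        show "let st = execution algA v W F (bits_of \<omega>) p1 p2 m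
          in stopped (fst st) \<and> stopped (snd st) \<and> dest (fst st) = dest (snd st)"
          using gm unfolding gl_def execution_def Let_def .
      qed
      moreover have "\<omega> \<in> space coin_space" using om unfolding E_def by simp
      ultimately show "\<omega> \<in> {\<omega> \<in> space coin_space. gathered algA v W F (bits_of \<omega>) p1 p2}" by simp
    qed
  qed
qed


end
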